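(* Fix parameters $0<\varepsilon<f<(1+\varepsilon)/2<1$ and $\sigma>0$. Let $pqr$ be a non-degenerate triangle in $\mathbb{R}^2$ with one of its vertices designated as apex and an ordering of the two other (base) vertices, and let $\tau(p),\tau(q),\tau(r)$ be real values with $\tau(p)\le\tau(q)\le\tau(r)$ such that $\|\nabla\tau\|<\sigma$ and the triangle satisfies the adaptive progress constraint $\sigma$. Let $d_p:=\operatorname{dist}(p,\operatorname{aff}(qr))$. Then for every $\delta\in[0,\varepsilon\,\sigma\,d_p]$, the affine function $\tau'$ with $\tau'(p)=\tau(p)+\delta$, $\tau'(q)=\tau(q)$, $\tau'(r)=\tau(r)$ satisfies $\|\nabla\tau'\|<\sigma$.
   Context: Values at the vertices of a triangle are extended to the unique affine function on $\mathbb{R}^2$, also denoted $\tau$; $\nabla\tau$ is its gradient. Diminished width: for a triangle written $abc$ with its apex listed first (here $a$), $\mathrm{dw}(abc):=\min\{(1-\varepsilon)\operatorname{dist}(a,\operatorname{aff}(bc)),\,(1-f)\operatorname{dist}(b,\operatorname{aff}(ac)),\,(1-f)\operatorname{dist}(c,\operatorname{aff}(ab))\}$ (symmetric in $b,c$). Adaptive progress constraint $\sigma$: for a triangle with apex $a$ and base vertices $b,c$ (in the given order), let $d$ be the midpoint of $bc$ and $e$ the midpoint of $ac$, with $\tau(d),\tau(e)$ the values of the affine function there; the triangle satisfies the constraint iff $|\tau(a)-\tau(b)|\le 2\,\mathrm{dw}(dca)\,\sigma$, $|\tau(a)-\tau(d)|\le\mathrm{dw}(abc)\,\sigma$, $|\tau(a)-\tau(c)|\le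 2\,\mathrm{dw}(dab)\,\sigma$, and $|\tau(b)-\tau(c)|\le 4\,\mathrm{dw}(ead)\,\sigma$ (in each $\mathrm{dw}$ the first-listed vertex is the apex of that smaller triangle). *)

theory Defs
  imports "HOL-Analysis.Analysis"
begin

definition tri_grad :: "real^2 \<Rightarrow> real^2 \<Rightarrow> real^2 \<Rightarrow> real \<Rightarrow> real \<Rightarrow> real \<Rightarrow> real^2" where
  "tri_grad a b c ta tb tc =
     (THE g. \<exists>k. g \<bullet> a + k = ta \<and> g \<bullet> b + k = tb \<and> g \<bullet> c + k = tc)"

definition tri_aff :: "real^2 \<Rightarrow> real^2 \<Rightarrow> real^2 \<Rightarrow> real \<Rightarrow> real \<Rightarrow> real \<Rightarrow> real^2 \<Rightarrow> real" where
  "tri_aff a b c ta tb tc x =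
     (let g = tri_grad a b c ta tb tc in g \<bullet> x + (ta - g \<bullet> a))"

definition dw :: "real \<Rightarrow> real \<Rightarrow> real^2 \<Rightarrow> real^2 \<Rightarrow> real^2 \<Rightarrow> real" where
  "dw eps f a b c =
     min ((1 - eps) * infdist a (affine hull {b, c}))
       (min ((1 - f) * infdist b (affine hull {a, c}))
            ((1 - f) * infdist c (affine hull {a, b})))"

definition adaptive_progress ::
  "real \<Rightarrow> real \<Rightarrow> real \<Rightarrow> real^2 \<Rightarrow> real^2 \<Rightarrow> real^2 \<Rightarrow> (real^2 \<Rightarrow> real) \<Rightarrow> bool" where
  "adaptive_progress eps f \<sigma> a b c T =
     (let d = midpoint b c; e = midpoint a c in
        \<bar>T a - T b\<bar> \<le> 2 * dw eps f d c a * \<sigma> \<and>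
        \<bar>T a - T d\<bar> \<le> dw eps f a b c * \<sigma> \<and>
        \<bar>T a - T c\<bar> \<le> 2 * dw eps f d a b * \<sigma> \<and>
        \<bar>T b - T c\<bar> \<le> 4 * dw eps f e a d * \<sigma>)"

end

theory Submission imports Defs begin

definition cr :: "real^2 \<Rightarrow> real^2 \<Rightarrow> real^2 \<Rightarrow> real" where
  "cr p q r = (q$1-p$1)*(r$2-p$2) - (q$2-p$2)*(r$1-p$1)"

definition gr :: "real^2 \<Rightarrow> real^2 \<Rightarrow> real^2 \<Rightarrow> real \<Rightarrow> real \<Rightarrow> real \<Rightarrow> real^2" where
  "gr p q r tp tq tr = vector [((tq-tp)*(r$2-p$2) - (tr-tp)*(q$2-p$2))/cr p q r,
                               ((tr-tp)*(q$1-p$1) - (tq-tp)*(r$1-p$1))/cr p q r]"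

lemma inner2: "(x::real^2) \<bullet> y = x$1*y$1 + x$2*y$2"
  by (simp add: inner_vec_def sum_2)

lemma norm2: "norm (x::real^2) = sqrt ((x$1)^2 + (x$2)^2)"
  by (simp add: norm_eq_sqrt_inner inner2 power2_eq_square)

lemma gr_ok_real:
  fixes px py qx qy rx ry :: real
  assumes "D = (qx-px)*(ry-py) - (qy-py)*(rx-px)" "D \<noteq> 0"
  shows "((tq-tp)*(ry-py) - (tr-tp)*(qy-py))/D * qx + ((tr-tp)*(qx-px) - (tq-tp)*(rx-px))/D * qy
       - (((tq-tp)*(ry-py) - (tr-tp)*(qy-py))/D * px + ((tr-tp)*(qx-px) - (tq-tp)*(rx-px))/D * py) = tq - tp"
    "((tq-tp)*(ry-py) - (tr-tp)*(qy-py))/D * rx + ((tr-tp)*(qx-px) - (tq-tp)*(rx-px))/D * ry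
       - (((tq-tp)*(ry-py) - (tr-tp)*(qy-py))/D * px + ((tr-tp)*(qx-px) - (tq-tp)*(rx-px))/D * py) = tr - tp"
  using assms by (simp_all add: field_simps, algebra+)

lemma gr_ok:
  assumes "cr p q r \<noteq> 0"
  shows "gr p q r tp tq tr \<bullet> q - gr p q r tp tq tr \<bullet> p = tq - tp"
    "gr p q r tp tq tr \<bullet> r - gr p q r tp tq tr \<bullet> p = tr - tp"
  using gr_ok_real[where D="cr p q r" and px="p$1" and py="p$2" and qx="q$1" and qy="q$2" and rx="r$1" and ry="r$2" and tq=tq and tp=tp and tr=tr, OF cr_def assms] unfolding gr_def inner2 cr_def
  by (simp_all add: mult.commute)

lemma gr_uniq:
  assumes "cr p q r \<noteq> 0" "g \<bullet> q - g \<bullet> p = tq - tp" "g \<bullet> r - g \<bullet> p = tr - tp"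
  shows "g = gr p q r tp tq tr"
proof -
  let ?D = "cr p q r"
  have e1: "g$1*(q$1-p$1) + g$2*(q$2-p$2) = tq - tp" using assms(2) by (simp add: inner2 algebra_simps)
  have e2: "g$1*(r$1-p$1) + g$2*(r$2-p$2) = tr - tp" using assms(3) by (simp add: inner2 algebra_simps)
  have a1: "g$1 * ?D = (tq-tp)*(r$2-p$2) - (tr-tp)*(q$2-p$2)"
    unfolding cr_def e1[symmetric] e2[symmetric] by (simp add: algebra_simps)
  have a2: "g$2 * ?D = (tr-tp)*(q$1-p$1) - (tq-tp)*(r$1-p$1)"
    unfolding cr_def e1[symmetric] e2[symmetric] by (simp add: algebra_simps)
  show ?thesis unfolding gr_def vec_eq_iff forall_2
    using a1 a2 assms(1) by (simp add: field_simps)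
qed

lemma tri_grad_eq:
  assumes "cr p q r \<noteq> 0"
  shows "tri_grad p q r tp tq tr = gr p q r tp tq tr"
  unfolding tri_grad_def
proof (rule the_equality)
  show "\<exists>k. gr p q r tp tq tr \<bullet> p + k = tp \<and> gr p q r tp tq tr \<bullet> q + k = tq \<and> gr p q r tp tq tr \<bullet> r + k = tr"
    using gr_ok[OF assms, of tp tq tr] by (intro exI[of _ "tp - gr p q r tp tq tr \<bullet> p"]) auto
next
  fix g assume "\<exists>k. g \<bullet> p + k = tp \<and> g \<bullet> q + k = tq \<and> g \<bullet> r + k = tr"
  then obtain k where "g \<bullet> p + k = tp" "g \<bullet> q + k = tq" "g \<bullet> r + k = tr" by blast
  then show "g = gr p q r tp tq tr" by (intro gr_uniq[OF assms]) auto
qed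

lemma tri_aff_vals:
  assumes "cr a b c \<noteq> 0"
  shows "tri_aff a b c ta tb tc a = ta" "tri_aff a b c ta tb tc b = tb" "tri_aff a b c ta tb tc c = tc"
  using gr_ok[OF assms, of ta tb tc] unfolding tri_aff_def Let_def tri_grad_eq[OF assms]
  by (auto simp: algebra_simps)

lemma cr_nz:
  assumes "\<not> collinear {p, q, r}"
  shows "cr p q r \<noteq> 0"
proof
  assume D: "cr p q r = 0"
  have "collinear {0, p - q, r - q}"
  proof -
    let ?x = "p - q" and ?y = "r - q"
    have cx: "?x$1 * ?y$2 = ?x$2 * ?y$1" using D unfolding cr_def by (simp add: algebra_simps)
    show ?thesis
    proof (cases "?x = 0")
      case False
      then have "?x$1 \<noteq> 0 \<or> ?x$2 \<noteq> 0" by (simp add: vec_eq_iff forall_2)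
      then have "\<exists>c. ?y = c *\<^sub>R ?x"
      proof
        assume h: "?x$1 \<noteq> 0"
        have "?y$2 = ?y$1 / ?x$1 * ?x$2" using h cx by (simp add: field_simps)
        then show ?thesis using h
          by (intro exI[of _ "?y$1 / ?x$1"]) (simp add: vec_eq_iff forall_2 del: vector_minus_component)
      next
        assume h: "?x$2 \<noteq> 0"
        have "?y$1 = ?y$2 / ?x$2 * ?x$1" using h cx by (simp add: field_simps)
        then show ?thesis using h
          by (intro exI[of _ "?y$2 / ?x$2"]) (simp add: vec_eq_iff forall_2 del: vector_minus_component)
      qed
      then show ?thesis by (simp add: collinear_lemma)
    qed (simp add: collinear_lemma)
  qed
  then show False using assms collinear_3[of p q r] by simp
qed

lemma lagr_real:
  fixes a1 a2 b1 b2 :: real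
  assumes "b1^2 + b2^2 > 0"
  shows "(a1 - (a1*b1+a2*b2)/(b1^2+b2^2) * b1)^2 + (a2 - (a1*b1+a2*b2)/(b1^2+b2^2) * b2)^2
         = (a1*b2 - a2*b1)^2 / (b1^2+b2^2)"
proof -
  define n where "n = b1^2 + b2^2"
  define s where "s = a1*b1+a2*b2"
  have nz: "n \<noteq> 0" using assms n_def by linarith
  have e1: "a1 - s/n*b1 = (a1*n - s*b1)/n" using nz by (simp add: field_simps)
  have e2: "a2 - s/n*b2 = (a2*n - s*b2)/n" using nz by (simp add: field_simps)
  have poly: "(a1*n - s*b1)^2 + (a2*n - s*b2)^2 = (a1*b2 - a2*b1)^2 * n"
    unfolding n_def s_def by algebra
  have "(a1 - s/n*b1)^2 + (a2 - s/n*b2)^2 = ((a1*n - s*b1)^2 + (a2*n - s*b2)^2) / n^2"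
    unfolding e1 e2 by (simp add: power_divide add_divide_distrib)
  also have "\<dots> = (a1*b2 - a2*b1)^2 / n" unfolding poly using nz by (simp add: power2_eq_square)
  finally show ?thesis unfolding n_def s_def .
qed

lemma infdist_line:
  fixes x y z :: "real^2"
  assumes "y \<noteq> z"
  shows "infdist x (affine hull {y, z}) \<le> \<bar>cr x y z\<bar> / norm (z - y)"
proof -
  define a where "a = x - y"
  define b where "b = z - y"
  have bnz: "b \<noteq> 0" using assms unfolding b_def by simp
  have nb: "norm b = sqrt ((b$1)^2 + (b$2)^2)" by (rule norm2)
  have pos: "(b$1)^2 + (b$2)^2 > 0"
    using bnz by (metis nb norm_eq_zero real_sqrt_zero add_nonneg_nonneg zero_le_power2 order_less_le)
  define t where "t = (a$1*b$1 + a$2*b$2) / ((b$1)^2 + (b$2)^2)"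
  define w where "w = y + t *\<^sub>R (z - y)"
  have "w \<in> affine hull {y, z}" unfolding affine_hull_2_alt w_def by auto
  then have "infdist x (affine hull {y, z}) \<le> dist x w" by (rule infdist_le)
  also have "dist x w = \<bar>cr x y z\<bar> / norm (z - y)"
  proof -
    have "x - w = a - t *\<^sub>R b" unfolding w_def a_def b_def by simp
    then have "(dist x w)^2 = (a$1 - t*b$1)^2 + (a$2 - t*b$2)^2"
      by (simp add: dist_norm norm2)
    also have "\<dots> = (a$1*b$2 - a$2*b$1)^2 / ((b$1)^2 + (b$2)^2)"
      unfolding t_def by (rule lagr_real[OF pos])
    also have "\<dots> = (\<bar>cr x y z\<bar> / norm (z - y))^2"
      using pos unfolding nb[unfolded b_def] cr_def a_def b_def
      by (simp add: power_divide algebra_simps power2_eq_square)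
    finally show ?thesis
      by (rule power2_eq_imp_eq) auto
  qed
  finally show ?thesis .
qed

lemma strict_tri:
  fixes a b :: "real^2"
  assumes "a$1*b$2 - a$2*b$1 \<noteq> 0"
  shows "norm (a + b) < norm a + norm b"
proof -
  have na: "(norm a)^2 = (a$1)^2 + (a$2)^2" by (simp add: norm2)
  have nb: "(norm b)^2 = (b$1)^2 + (b$2)^2" by (simp add: norm2)
  have "(norm a * norm b)^2 - (a \<bullet> b)^2 = (a$1*b$2 - a$2*b$1)^2"
    unfolding power_mult_distrib na nb inner2 by algebra
  then have "(a \<bullet> b)^2 < (norm a * norm b)^2" using assms by (simp add: algebra_simps)
  then have ab: "a \<bullet> b < norm a * norm b"
    by (rule power2_less_imp_less) simp
  have "(norm (a+b))^2 = (norm a)^2 + 2 * (a \<bullet> b) + (norm b)^2"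
    by (simp add: power2_norm_eq_inner inner_add algebra_simps inner_commute)
  also have "\<dots> < (norm a + norm b)^2" using ab by (simp add: power2_eq_square algebra_simps)
  finally show ?thesis
    by (rule power2_less_imp_less) simp
qed

lemma gform:
  assumes "cr p q r \<noteq> 0"
  shows "gr p q r t tq tr = (t - tq) *\<^sub>R vector [(q$2 - r$2)/cr p q r, (r$1 - q$1)/cr p q r]
        + vector [-(tr-tq)*(q$2-p$2)/cr p q r, (tr-tq)*(q$1-p$1)/cr p q r]"
proof -
  have h: "\<And>A B C c D::real. A = c*B + C \<Longrightarrow> A/D = c*(B/D) + C/D"
    by (simp add: add_divide_distrib)
  show ?thesis
    unfolding gr_def vec_eq_iff forall_2
    by (simp add: algebra_simps, simp only: add_divide_distrib[symmetric], simp add: algebra_simps)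
qed

lemma core:
  fixes p q r :: "real^2" and tp tq tr eps \<sigma> \<delta> :: real
  assumes D: "cr p q r \<noteq> 0" and e0: "0 < eps" and e1: "eps < 1" and s0: "0 < \<sigma>"
    and pq: "tp \<le> tq"
    and hV: "\<bar>tr - tq\<bar> \<le> (1 - eps) * \<sigma> * \<bar>cr p q r\<bar> / norm (p - q)"
    and hg: "norm (tri_grad p q r tp tq tr) < \<sigma>"
    and d0: "0 \<le> \<delta>" and d1: "\<delta> \<le> eps * \<sigma> * (\<bar>cr p q r\<bar> / norm (r - q))"
  shows "norm (tri_grad p q r (tp + \<delta>) tq tr) < \<sigma>"
proof -
  define Dv where "Dv = cr p q r"
  define G where "G = (vector [(q$2 - r$2)/Dv, (r$1 - q$1)/Dv] :: real^2)"
  define V where "V = (vector [-(tr-tq)*(q$2-p$2)/Dv, (tr-tq)*(q$1-p$1)/Dv] :: real^2)"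
  have gf: "\<And>t. tri_grad p q r t tq tr = (t - tq) *\<^sub>R G + V"
    unfolding tri_grad_eq[OF D] G_def V_def Dv_def by (rule gform[OF D])
  have qr: "q \<noteq> r" using D unfolding cr_def by auto
  have pq': "p \<noteq> q" using D unfolding cr_def by auto
  have Dp: "\<bar>Dv\<bar> > 0" using D Dv_def by simp
  have nrq: "norm (r - q) > 0" using qr by simp
  have npq: "norm (p - q) > 0" using pq' by simp
  have nG: "norm G = norm (r - q) / \<bar>Dv\<bar>"
  proof -
    have "norm G = sqrt (((q$2 - r$2)^2 + (r$1 - q$1)^2) / Dv^2)"
      unfolding G_def norm2 by (simp add: power_divide add_divide_distrib)
    also have "\<dots> = sqrt ((q$2 - r$2)^2 + (r$1 - q$1)^2) / \<bar>Dv\<bar>"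
      by (simp add: real_sqrt_divide)
    also have "sqrt ((q$2 - r$2)^2 + (r$1 - q$1)^2) = norm (r - q)"
      unfolding norm2 by (simp add: power2_commute)
    finally show ?thesis .
  qed
  have nV: "norm V = \<bar>tr - tq\<bar> * norm (p - q) / \<bar>Dv\<bar>"
  proof -
    have "norm V = sqrt ((tr - tq)^2 * ((q$2 - p$2)^2 + (q$1 - p$1)^2) / Dv^2)"
    proof -
      have h: "\<And>x a b D::real. D \<noteq> 0 \<Longrightarrow> (-x*a/D)^2 + (x*b/D)^2 = x^2 * (a^2 + b^2) / D^2"
        by (simp add: power2_eq_square field_simps)
      show ?thesis unfolding V_def norm2 vector_2 h[OF Dp[unfolded zero_less_abs_iff]] by (simp add: add.commute)
    qed
    also have "\<dots> = \<bar>tr - tq\<bar> * sqrt ((q$2 - p$2)^2 + (q$1 - p$1)^2) / \<bar>Dv\<bar>"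
      by (simp add: real_sqrt_divide real_sqrt_mult)
    also have "sqrt ((q$2 - p$2)^2 + (q$1 - p$1)^2) = norm (p - q)"
      unfolding norm2 by (simp add: power2_commute add.commute)
    finally show ?thesis .
  qed
  have nVle: "norm V \<le> (1 - eps) * \<sigma>"
  proof -
    have "norm V = \<bar>tr - tq\<bar> * (norm (p - q) / \<bar>Dv\<bar>)" using nV by simp
    also have "\<dots> \<le> ((1 - eps) * \<sigma> * \<bar>Dv\<bar> / norm (p - q)) * (norm (p - q) / \<bar>Dv\<bar>)"
      using hV Dv_def by (intro mult_right_mono) auto
    also have "\<dots> = (1 - eps) * \<sigma>" using Dp npq by (simp add: field_simps)
    finally show ?thesis .
  qed
  define L where "L = \<bar>Dv\<bar> / norm (r - q)"
  have Lp: "L > 0" using Dp nrq L_def by simp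
  define c1 where "c1 = eps * \<sigma> * L"
  have c1p: "c1 > 0" using e0 s0 Lp c1_def by simp
  have nc1G: "norm (c1 *\<^sub>R G) = eps * \<sigma>"
  proof -
    have "norm (c1 *\<^sub>R G) = c1 * (norm (r - q) / \<bar>Dv\<bar>)" using c1p nG by simp
    then show ?thesis using Dp nrq unfolding c1_def L_def by (simp add: field_simps)
  qed
  define B where "B = c1 *\<^sub>R G + V"
  have nB: "norm B < \<sigma>"
  proof (cases "tr = tq")
    case True
    then have "V = 0" unfolding V_def by (simp add: vec_eq_iff forall_2)
    then show ?thesis using nc1G e1 s0 B_def by simp
  next
    case False
    have cr: "(c1 *\<^sub>R G)$1 * V$2 - (c1 *\<^sub>R G)$2 * V$1 \<noteq> 0"
    proof -
      have "(c1 *\<^sub>R G)$1 * V$2 - (c1 *\<^sub>R G)$2 * V$1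
          = c1 * (tr - tq) * ((q$2 - r$2)*(q$1-p$1) + (r$1 - q$1)*(q$2-p$2)) / Dv^2"
      proof -
        have h: "\<And>c a D x b e f::real. D \<noteq> 0 \<Longrightarrow> c*(a/D) * (x*b/D) - c*(e/D) * (-x*f/D) = c*x*(a*b+e*f)/D^2"
          by (simp add: power2_eq_square field_simps)
        show ?thesis unfolding G_def V_def vector_scaleR_component vector_2 real_scaleR_def
          by (subst h) (use Dp in auto)
      qed
      also have "(q$2 - r$2)*(q$1-p$1) + (r$1 - q$1)*(q$2-p$2) = - Dv"
        unfolding Dv_def cr_def by (simp add: algebra_simps)
      finally show ?thesis using c1p False Dp by simp
    qed
    have "norm B < norm (c1 *\<^sub>R G) + norm V" unfolding B_def by (rule strict_tri[OF cr])
    then show ?thesis using nc1G nVle by (simp add: algebra_simps)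
  qed
  define A where "A = (tp - tq) *\<^sub>R G + V"
  have nA: "norm A < \<sigma>" using hg gf A_def by simp
  define c0 where "c0 = tp - tq"
  define c where "c = tp + \<delta> - tq"
  have c0le: "c0 \<le> 0" using pq c0_def by simp
  have cc0: "c0 \<le> c" using d0 c_def c0_def by simp
  have cc1: "c \<le> c1" using d1 pq c_def c1_def L_def Dv_def by simp
  define l where "l = (c1 - c) / (c1 - c0)"
  have den: "c1 - c0 > 0" using c1p c0le by simp
  have l0: "0 \<le> l" using cc1 den l_def by simp
  have l1: "l \<le> 1" using cc0 den l_def by simp
  have comb: "c = l * c0 + (1 - l) * c1" using den l_def by (simp add: field_simps)
  have "tri_grad p q r (tp + \<delta>) tq tr = c *\<^sub>R G + V" using gf c_def by simp
  also have "\<dots> = l *\<^sub>R A + (1 - l) *\<^sub>R B"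
    unfolding A_def B_def comb c0_def by (simp add: algebra_simps scaleR_add_left)
  finally have eq: "tri_grad p q r (tp + \<delta>) tq tr = l *\<^sub>R A + (1 - l) *\<^sub>R B" .
  have "norm (l *\<^sub>R A + (1 - l) *\<^sub>R B) \<le> l * norm A + (1 - l) * norm B"
    using l0 l1 by (metis abs_of_nonneg diff_ge_0_iff_ge norm_scaleR norm_triangle_ineq)
  also have "\<dots> < \<sigma>"
  proof (cases "l = 0")
    case True then show ?thesis using nB by simp
  next
    case False
    then have "l * norm A < l * \<sigma>" using l0 nA by simp
    moreover have "(1 - l) * norm B \<le> (1 - l) * \<sigma>" using l1 nB by (intro mult_left_mono) auto
    ultimately show ?thesis by (simp add: algebra_simps)
  qed
  finally show ?thesis using eq by simp
qed

lemma cr_perm: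
  "cr p r q = - cr p q r" "cr q p r = - cr p q r" "cr q r p = cr p q r"
  "cr r p q = cr p q r" "cr r q p = - cr p q r"
  unfolding cr_def by (simp_all add: algebra_simps)

lemma cr_mid:
  "cr (midpoint b c) c a = cr a b c / 2" "cr (midpoint b c) a b = cr a b c / 2"
  unfolding cr_def midpoint_def by (simp_all add: algebra_simps)

lemma tri_grad_swap: "tri_grad p r q tp tr tq = tri_grad p q r tp tq tr"
  unfolding tri_grad_def by (simp add: conj_ac)

lemma core2:
  fixes p q r u w :: "real^2" and \<tau> :: "real^2 \<Rightarrow> real" and eps \<sigma> \<delta> :: real
  assumes D: "cr p q r \<noteq> 0" and e0: "0 < eps" and e1: "eps < 1" and s0: "0 < \<sigma>"
    and m1: "\<tau> p \<le> \<tau> q" and m2: "\<tau> p \<le> \<tau> r"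
    and ow: "(u = q \<and> w = r) \<or> (u = r \<and> w = q)"
    and hV: "\<bar>\<tau> w - \<tau> u\<bar> \<le> (1 - eps) * \<sigma> * \<bar>cr p q r\<bar> / norm (p - u)"
    and hg: "norm (tri_grad p q r (\<tau> p) (\<tau> q) (\<tau> r)) < \<sigma>"
    and d0: "0 \<le> \<delta>" and d1: "\<delta> \<le> eps * \<sigma> * infdist p (affine hull {q, r})"
  shows "norm (tri_grad p q r (\<tau> p + \<delta>) (\<tau> q) (\<tau> r)) < \<sigma>"
proof -
  have qr: "q \<noteq> r" using D unfolding cr_def by auto
  have "infdist p (affine hull {q, r}) \<le> \<bar>cr p q r\<bar> / norm (r - q)"
    by (rule infdist_line[OF qr])
  then have d1': "\<delta> \<le> eps * \<sigma> * (\<bar>cr p q r\<bar> / norm (r - q))"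
  proof -
    have "eps * \<sigma> * infdist p (affine hull {q, r}) \<le> eps * \<sigma> * (\<bar>cr p q r\<bar> / norm (r - q))"
      using e0 s0 \<open>infdist p (affine hull {q, r}) \<le> _\<close> by (intro mult_left_mono) auto
    then show ?thesis using d1 by linarith
  qed
  from ow show ?thesis
  proof
    assume "u = q \<and> w = r"
    then show ?thesis using core[OF D e0 e1 s0 m1 _ hg d0 d1'] hV by simp
  next
    assume h: "u = r \<and> w = q"
    have D': "cr p r q \<noteq> 0" using D cr_perm(1)[of p r q] by simp
    have "norm (tri_grad p r q (\<tau> p + \<delta>) (\<tau> r) (\<tau> q)) < \<sigma>"
    proof (rule core[OF D' e0 e1 s0 m2])
      show "\<bar>\<tau> q - \<tau> r\<bar> \<le> (1 - eps) * \<sigma> * \<bar>cr p r q\<bar> / norm (p - r)" using hV h cr_perm(1)[of p r q] by simp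
      show "norm (tri_grad p r q (\<tau> p) (\<tau> r) (\<tau> q)) < \<sigma>" using hg tri_grad_swap by simp
      show "0 \<le> \<delta>" by (rule d0)
      show "\<delta> \<le> eps * \<sigma> * (\<bar>cr p r q\<bar> / norm (q - r))" using d1' cr_perm(1)[of p r q] by (simp add: norm_minus_commute)
    qed
    then show ?thesis using tri_grad_swap by simp
  qed
qed

lemma two_three:
  assumes "{x, y} = {p, q, r}" "p \<noteq> q" "p \<noteq> r" "q \<noteq> r"
  shows False
proof -
  have "p \<in> {x, y}" "q \<in> {x, y}" "r \<in> {x, y}" using assms(1) by blast+
  then show False using assms(2-4) by blast
qed

lemma cr_abs_perm:
  assumes "{a, b, c} = {p, q, r}" "a \<noteq> b" "a \<noteq> c" "b \<noteq> c"
  shows "\<bar>cr a b c\<bar> = \<bar>cr p q r\<bar>"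
proof -
  have "a \<in> {p,q,r}" "b \<in> {p,q,r}" "c \<in> {p,q,r}" using assms(1) by blast+
  then have "(a=p \<and> b=q \<and> c=r) \<or> (a=p \<and> b=r \<and> c=q) \<or> (a=q \<and> b=p \<and> c=r) \<or>
             (a=q \<and> b=r \<and> c=p) \<or> (a=r \<and> b=p \<and> c=q) \<or> (a=r \<and> b=q \<and> c=p)"
    using assms(2-4) by blast
  then show ?thesis using cr_perm[of p q r] by auto
qed

theorem mainTheorem7:
  fixes eps f \<sigma> :: real
    and p q r a b c :: "real^2"
    and \<tau> :: "real^2 \<Rightarrow> real"
  assumes "0 < eps" "eps < f" "f < (1 + eps) / 2" "(1 + eps) / 2 < 1" "0 < \<sigma>"
    and "\<not> collinear {p, q, r}"
    and "{a, b, c} = {p, q, r}"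
    and "\<tau> p \<le> \<tau> q" "\<tau> q \<le> \<tau> r"
    and "norm (tri_grad p q r (\<tau> p) (\<tau> q) (\<tau> r)) < \<sigma>"
    and "adaptive_progress eps f \<sigma> a b c (tri_aff a b c (\<tau> a) (\<tau> b) (\<tau> c))"
  shows "\<forall>\<delta>. 0 \<le> \<delta> \<and> \<delta> \<le> eps * \<sigma> * infdist p (affine hull {q, r}) \<longrightarrow>
           norm (tri_grad p q r (\<tau> p + \<delta>) (\<tau> q) (\<tau> r)) < \<sigma>"
proof (intro allI impI)
  fix \<delta> assume hd: "0 \<le> \<delta> \<and> \<delta> \<le> eps * \<sigma> * infdist p (affine hull {q, r})"
  have e0: "0 < eps" and e1: "eps < 1" and s0: "0 < \<sigma>" using assms(1-5) by auto
  have D: "cr p q r \<noteq> 0" by (rule cr_nz[OF assms(6)])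
  have dpqr: "p \<noteq> q" "p \<noteq> r" "q \<noteq> r" using D unfolding cr_def by auto
  have set: "{a, b, c} = {p, q, r}" by (rule assms(7))
  have dabc: "a \<noteq> b" "a \<noteq> c" "b \<noteq> c"
    using set dpqr two_three by (auto simp: insert_commute)
  have Dabc: "cr a b c \<noteq> 0" using cr_nz assms(6) set by metis
  have cabs: "\<bar>cr a b c\<bar> = \<bar>cr p q r\<bar>" by (rule cr_abs_perm[OF set dabc])
  define T where "T = tri_aff a b c (\<tau> a) (\<tau> b) (\<tau> c)"
  note Tv = tri_aff_vals[OF Dabc, of "\<tau> a" "\<tau> b" "\<tau> c", folded T_def]
  define d where "d = midpoint b c"
  have C1: "\<bar>\<tau> a - \<tau> b\<bar> \<le> 2 * dw eps f d c a * \<sigma>"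
   and C3: "\<bar>\<tau> a - \<tau> c\<bar> \<le> 2 * dw eps f d a b * \<sigma>"
    using assms(11) unfolding adaptive_progress_def Let_def T_def[symmetric] d_def[symmetric] Tv by auto
  have w1: "dw eps f d c a \<le> (1 - eps) * (\<bar>cr a b c\<bar> / 2 / norm (a - c))"
  proof -
    have "dw eps f d c a \<le> (1 - eps) * infdist d (affine hull {c, a})" unfolding dw_def by simp
    also have "\<dots> \<le> (1 - eps) * (\<bar>cr d c a\<bar> / norm (a - c))"
      using infdist_line[of c a d] dabc e1 by (intro mult_left_mono) auto
    finally show ?thesis unfolding d_def cr_mid by simp
  qed
  have w3: "dw eps f d a b \<le> (1 - eps) * (\<bar>cr a b c\<bar> / 2 / norm (a - b))"
  proof -
    have "dw eps f d a b \<le> (1 - eps) * infdist d (affine hull {a, b})" unfolding dw_def by simp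
    also have "\<dots> \<le> (1 - eps) * (\<bar>cr d a b\<bar> / norm (b - a))"
      using infdist_line[of a b d] dabc e1 by (intro mult_left_mono) auto
    finally show ?thesis unfolding d_def cr_mid by (simp add: norm_minus_commute)
  qed
  have F1: "\<bar>\<tau> a - \<tau> b\<bar> \<le> (1 - eps) * \<sigma> * \<bar>cr p q r\<bar> / norm (a - c)"
  proof -
    have "2 * dw eps f d c a * \<sigma> \<le> 2 * ((1 - eps) * (\<bar>cr a b c\<bar> / 2 / norm (a - c))) * \<sigma>"
      using w1 s0 by (intro mult_right_mono) auto
    moreover have "2 * ((1 - eps) * (\<bar>cr a b c\<bar> / 2 / norm (a - c))) * \<sigma> = (1 - eps) * \<sigma> * \<bar>cr p q r\<bar> / norm (a - c)"
      using cabs by simp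
    ultimately show ?thesis using C1 by linarith
  qed
  have F3: "\<bar>\<tau> a - \<tau> c\<bar> \<le> (1 - eps) * \<sigma> * \<bar>cr p q r\<bar> / norm (a - b)"
  proof -
    have "2 * dw eps f d a b * \<sigma> \<le> 2 * ((1 - eps) * (\<bar>cr a b c\<bar> / 2 / norm (a - b))) * \<sigma>"
      using w3 s0 by (intro mult_right_mono) auto
    moreover have "2 * ((1 - eps) * (\<bar>cr a b c\<bar> / 2 / norm (a - b))) * \<sigma> = (1 - eps) * \<sigma> * \<bar>cr p q r\<bar> / norm (a - b)"
      using cabs by simp
    ultimately show ?thesis using C3 by linarith
  qed
  have m1: "\<tau> p \<le> \<tau> q" and m2: "\<tau> p \<le> \<tau> r" using assms(8,9) by auto
  have hd0: "0 \<le> \<delta>" and hd1: "\<delta> \<le> eps * \<sigma> * infdist p (affine hull {q, r})" using hd by auto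
  note C = core2[OF D e0 e1 s0 m1 m2 _ _ assms(10) hd0 hd1]
  have mem: "a \<in> {p, q, r}" "b \<in> {p, q, r}" "c \<in> {p, q, r}" using set by blast+
  have "p \<in> {a, b, c}" using set by blast
  then consider "p = a" | "p = b" | "p = c" by blast
  then show "norm (tri_grad p q r (\<tau> p + \<delta>) (\<tau> q) (\<tau> r)) < \<sigma>"
  proof cases
    case 1
    have bc: "b \<in> {q, r}" "c \<in> {q, r}" using mem dabc 1 by auto
    have ow: "(b = q \<and> c = r) \<or> (b = r \<and> c = q)" using bc dabc by blast
    have tb: "\<tau> p \<le> \<tau> b" "\<tau> p \<le> \<tau> c" using bc m1 m2 by auto
    show ?thesis
    proof (cases "\<tau> b \<le> \<tau> c")
      case True
      have "\<bar>\<tau> c - \<tau> b\<bar> \<le> (1 - eps) * \<sigma> * \<bar>cr p q r\<bar> / norm (p - b)"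
        using F3 True tb 1 by simp
      then show ?thesis using C[of b c] ow by blast
    next
      case False
      have "\<bar>\<tau> b - \<tau> c\<bar> \<le> (1 - eps) * \<sigma> * \<bar>cr p q r\<bar> / norm (p - c)"
        using F1 False tb 1 by simp
      then show ?thesis using C[of c b] ow by blast
    qed
  next
    case 2
    have ac: "a \<in> {q, r}" "c \<in> {q, r}" using mem dabc 2 by auto
    have ow: "(a = q \<and> c = r) \<or> (a = r \<and> c = q)" using ac dabc by blast
    have "\<bar>\<tau> c - \<tau> a\<bar> \<le> (1 - eps) * \<sigma> * \<bar>cr p q r\<bar> / norm (p - a)"
      using F3 2 by (simp add: abs_minus_commute norm_minus_commute)
    then show ?thesis using C[of a c] ow by blast
  next
    case 3
    have ab: "a \<in> {q, r}" "b \<in> {q, r}" using mem dabc 3 by auto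
    have ow: "(a = q \<and> b = r) \<or> (a = r \<and> b = q)" using ab dabc by blast
    have "\<bar>\<tau> b - \<tau> a\<bar> \<le> (1 - eps) * \<sigma> * \<bar>cr p q r\<bar> / norm (p - a)"
      using F1 3 by (simp add: abs_minus_commute norm_minus_commute)
    then show ?thesis using C[of a b] ow by blast
  qed
qed

end
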